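(* Suppose the polymer model with edge weights $R^1,R^2,(Y^1,Y^2)$ possesses the down-right property. Then for all $(m,n)\in\mathbb{Z}_+^2$: (a) $\mathbb{E}[\log Z_{m,n}]=m\,\mathbb{E}[\log R^1]+n\,\mathbb{E}[\log R^2]$; (b) $\mathrm{Var}[\log Z_{m,n}]=-m\,\mathrm{Var}[\log R^1]+n\,\mathrm{Var}[\log R^2]+2\,\mathrm{Cov}(S_N,S_S)$; (c) $\mathrm{Var}[\log Z_{m,n}]=m\,\mathrm{Var}[\log R^1]-n\,\mathrm{Var}[\log R^2]+2\,\mathrm{Cov}(S_E,S_W)$, where \[ S_N=\log Z_{m,n}-\log Z_{0,n}=\sum_{i=1}^m\log R^1_{i,n},\quad S_S=\log Z_{m,0}=\sum_{i=1}^m\log R^1_{i,0}, \] \[ S_E=\log Z_{m,n}-\log Z_{m,0}=\sum_{j=1}^n\log R^2_{m,j},\quad S_W=\log Z_{0,n}=\sum_{j=1}^n\log R^2_{0,j}. \]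
   Context: Polymer model with edge weights $R^1,R^2,(Y^1,Y^2)$: the edges of $\mathbb{Z}_+^2$ carry positive random weights. For $z\in\mathbb{N}^2$, $Y^1_z$ is the weight of the horizontal edge $\{z-(1,0),z\}$ and $Y^2_z$ of the vertical edge $\{z-(0,1),z\}$; the pairs $(Y^1_z,Y^2_z)$ are i.i.d. with the law of $(Y^1,Y^2)$. For $i\in\mathbb{N}$ the edge $\{(i-1,0),(i,0)\}$ carries $R^1_{i,0}$, and for $j\in\mathbb{N}$ the edge $\{(0,j-1),(0,j)\}$ carries $R^2_{0,j}$; these are i.i.d. with laws of $R^1$, resp. $R^2$; the three collections are mutually independent. $Z_x$ is the sum over up-right paths from $(0,0)$ to $x$ of the product of the edge weights along the path, $Z_{0,0}=1$. With $\alpha_1=(1,0)$, $\alpha_2=(0,1)$, define $R^k_x:=Z_x/Z_{x-\alpha_k}$ for $k=1,2$ and all $x$ with $x-\alpha_k\in\mathbb{Z}_+^2$. A down-right path is a sequence $\pi=(\pi_k)_{k\in\mathbb{Z}}$ in $\mathbb{Z}_+^2$ with $\pi_{k+1}-\pi_k\in\{\alpha_1,-\alpha_2\}$. To the edge $\{\pi_{k-1},\pi_k\}$ associate $R^1_{\pi_k}$ if horizontal and $R^2_{\pi_{k-1}}$ if vertical. The model has the down-right property if for every down-right path $\pi$ the associated random variables are independent and each $R^1_{\pi_k}$, resp. $R^2_{\pi_k}$, in the collection is distributed as $R^1$, resp. $R^2$. *)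

theory Defs
  imports "HOL-Probability.Probability"
begin

text \<open>Weight of the horizontal edge entering x = (i,j), i.e. the edge from (i-1,j) to (i,j)
  (only meaningful for i \<ge> 1): boundary weight R1 i if j = 0, else Y1 (i,j).
  Weight of the vertical edge entering (i,j), from (i,j-1) (meaningful for j \<ge> 1):
  boundary weight R2 j if i = 0, else Y2 (i,j).\<close>

definition hw :: "(nat \<times> nat \<Rightarrow> real) \<Rightarrow> (nat \<Rightarrow> real) \<Rightarrow> nat \<times> nat \<Rightarrow> real" where
  "hw Y1 R1 x = (if snd x = 0 then R1 (fst x) else Y1 x)"

definition vw :: "(nat \<times> nat \<Rightarrow> real) \<Rightarrow> (nat \<Rightarrow> real) \<Rightarrow> nat \<times> nat \<Rightarrow> real" where
  "vw Y2 R2 x = (if fst x = 0 then R2 (snd x) else Y2 x)"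

fun pathw :: "(nat \<times> nat \<Rightarrow> real) \<Rightarrow> (nat \<times> nat \<Rightarrow> real) \<Rightarrow> nat \<times> nat \<Rightarrow> bool list \<Rightarrow> real" where
  "pathw h v x [] = 1"
| "pathw h v x (True # s) = h (fst x + 1, snd x) * pathw h v (fst x + 1, snd x) s"
| "pathw h v x (False # s) = v (fst x, snd x + 1) * pathw h v (fst x, snd x + 1) s"

definition uppaths :: "nat \<times> nat \<Rightarrow> bool list set" where
  "uppaths x = {s. length s = fst x + snd x \<and> length (filter id s) = fst x}"

definition Zpf :: "(nat \<times> nat \<Rightarrow> real) \<Rightarrow> (nat \<times> nat \<Rightarrow> real) \<Rightarrow> (nat \<Rightarrow> real) \<Rightarrow> (nat \<Rightarrow> real)
    \<Rightarrow> nat \<times> nat \<Rightarrow> real" where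
  "Zpf Y1 Y2 R1 R2 x = (\<Sum>s\<in>uppaths x. pathw (hw Y1 R1) (vw Y2 R2) (0,0) s)"

definition down_right :: "(int \<Rightarrow> nat \<times> nat) \<Rightarrow> bool" where
  "down_right p \<longleftrightarrow> (\<forall>k. p (k + 1) = (fst (p k) + 1, snd (p k))
       \<or> (fst (p (k + 1)) = fst (p k) \<and> snd (p k) = snd (p (k + 1)) + 1))"

definition horiz_step :: "(int \<Rightarrow> nat \<times> nat) \<Rightarrow> int \<Rightarrow> bool" where
  "horiz_step p k \<longleftrightarrow> p k = (fst (p (k - 1)) + 1, snd (p (k - 1)))"

definition Rone :: "(nat \<times> nat \<Rightarrow> real) \<Rightarrow> nat \<times> nat \<Rightarrow> real" where
  "Rone Z x = Z x / Z (fst x - 1, snd x)"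

definition Rtwo :: "(nat \<times> nat \<Rightarrow> real) \<Rightarrow> nat \<times> nat \<Rightarrow> real" where
  "Rtwo Z x = Z x / Z (fst x, snd x - 1)"

definition edge_var :: "(nat \<times> nat \<Rightarrow> real) \<Rightarrow> (int \<Rightarrow> nat \<times> nat) \<Rightarrow> int \<Rightarrow> real" where
  "edge_var Z p k = (if horiz_step p k then Rone Z (p k) else Rtwo Z (p (k - 1)))"

definition (in prob_space) covariance :: "('a \<Rightarrow> real) \<Rightarrow> ('a \<Rightarrow> real) \<Rightarrow> real" where
  "covariance X Y = expectation (\<lambda>\<omega>. (X \<omega> - expectation X) * (Y \<omega> - expectation Y))"

end

theory Submission imports Defs begin

lemma pathw_pos:
  assumes "\<And>a b. h (a+1,b) > (0::real)" "\<And>a b. v (a,b+1) > (0::real)"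
  shows "pathw h v x s > 0"
proof (induction s arbitrary: x)
  case Nil then show ?case by simp
next
  case (Cons b s)
  then show ?case using assms by (cases b) (auto intro!: mult_pos_pos)
qed

lemma uppaths_finite: "finite (uppaths x)"
proof -
  have "uppaths x \<subseteq> {s. set s \<subseteq> (UNIV::bool set) \<and> length s = fst x + snd x}"
    by (auto simp: uppaths_def)
  moreover have "finite {s. set s \<subseteq> (UNIV::bool set) \<and> length s = fst x + snd x}"
    by (rule finite_lists_length_eq) simp
  ultimately show ?thesis by (rule finite_subset)
qed

lemma uppaths_ne: "replicate (fst x) True @ replicate (snd x) False \<in> uppaths x"
  by (simp add: uppaths_def)

lemma uppaths_00: "uppaths (0,0) = {[]}"
  by (auto simp: uppaths_def)

lemma Zpf_pos:
  assumes "\<And>z. fst z \<ge> 1 \<Longrightarrow> snd z \<ge> 1 \<Longrightarrow> Y1 z > 0"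
    and "\<And>z. fst z \<ge> 1 \<Longrightarrow> snd z \<ge> 1 \<Longrightarrow> Y2 z > 0"
    and "\<And>i. i \<ge> 1 \<Longrightarrow> R1 i > 0"
    and "\<And>j. j \<ge> 1 \<Longrightarrow> R2 j > 0"
  shows "Zpf Y1 Y2 R1 R2 x > 0"
  unfolding Zpf_def
proof (rule sum_pos2[OF uppaths_finite uppaths_ne])
  have h: "hw Y1 R1 (a+1,b) > 0" for a b using assms(1,3) by (auto simp: hw_def)
  have v: "vw Y2 R2 (a,b+1) > 0" for a b using assms(2,4) by (auto simp: vw_def)
  show "pathw (hw Y1 R1) (vw Y2 R2) (0, 0) (replicate (fst x) True @ replicate (snd x) False) > 0"
    using pathw_pos[of "hw Y1 R1" "vw Y2 R2"] h v by blast
  show "\<And>i. i \<in> uppaths x \<Longrightarrow> 0 \<le> pathw (hw Y1 R1) (vw Y2 R2) (0, 0) i"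
    using pathw_pos[of "hw Y1 R1" "vw Y2 R2"] h v by (meson less_imp_le)
qed

lemma Zpf_00: "Zpf Y1 Y2 R1 R2 (0,0) = 1"
  by (simp add: Zpf_def uppaths_00)

lemma tele1:
  assumes "\<And>x. f x > (0::real)"
  shows "ln (f (m,n)) - ln (f (0,n)) = (\<Sum>i\<in>{1..m}. ln (Rone f (i,n)))"
proof (induction m)
  case 0 then show ?case by simp
next
  case (Suc m)
  have "ln (Rone f (Suc m, n)) = ln (f (Suc m, n)) - ln (f (m,n))"
    using assms[of "(Suc m, n)"] assms[of "(m, n)"] by (simp add: Rone_def ln_div)
  then show ?case using Suc by (simp add: sum.cl_ivl_Suc)
qed

lemma tele2:
  assumes "\<And>x. f x > (0::real)"
  shows "ln (f (m,n)) - ln (f (m,0)) = (\<Sum>j\<in>{1..n}. ln (Rtwo f (m,j)))"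
proof (induction n)
  case 0 then show ?case by simp
next
  case (Suc n)
  have "ln (Rtwo f (m, Suc n)) = ln (f (m, Suc n)) - ln (f (m,n))"
    using assms[of "(m, Suc n)"] assms[of "(m, n)"] by (simp add: Rtwo_def ln_div)
  then show ?case using Suc by (simp add: sum.cl_ivl_Suc)
qed

definition p1 :: "nat \<Rightarrow> nat \<Rightarrow> int \<Rightarrow> nat \<times> nat" where
  "p1 m n k = (if k \<le> 0 then (0, nat (int n - k)) else if k \<le> int m then (nat k, n)
     else if k \<le> int m + int n then (m, nat (int m + int n - k)) else (nat (k - int n), 0))"

definition p2 :: "nat \<Rightarrow> int \<Rightarrow> nat \<times> nat" where
  "p2 n k = (if k \<le> int n then (0, nat (int n - k)) else (nat (k - int n), 0))"

lemma p1_dr: "down_right (p1 m n)"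
  unfolding down_right_def
proof
  fix k :: int
  consider "k < 0" | "0 \<le> k \<and> k < int m" | "int m \<le> k \<and> k < int m + int n" | "int m + int n \<le> k"
    by linarith
  then show "p1 m n (k + 1) = (fst (p1 m n k) + 1, snd (p1 m n k)) \<or>
         fst (p1 m n (k + 1)) = fst (p1 m n k) \<and> snd (p1 m n k) = snd (p1 m n (k + 1)) + 1"
    by cases (auto simp: p1_def)
qed

lemma p2_dr: "down_right (p2 n)"
  unfolding down_right_def
proof
  fix k :: int
  consider "k < int n" | "int n \<le> k"
    by linarith
  then show "p2 n (k + 1) = (fst (p2 n k) + 1, snd (p2 n k)) \<or>
         fst (p2 n (k + 1)) = fst (p2 n k) \<and> snd (p2 n k) = snd (p2 n (k + 1)) + 1"
    by cases (auto simp: p2_def)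
qed

lemma p1_N: "1 \<le> i \<Longrightarrow> i \<le> m \<Longrightarrow> horiz_step (p1 m n) (int i) \<and> edge_var Z (p1 m n) (int i) = Rone Z (i,n)"
  by (auto simp: horiz_step_def edge_var_def p1_def)

lemma p1_E: "1 \<le> j \<Longrightarrow> j \<le> n \<Longrightarrow> \<not> horiz_step (p1 m n) (int (m+n+1-j)) \<and> edge_var Z (p1 m n) (int (m+n+1-j)) = Rtwo Z (m,j)"
  by (auto simp: horiz_step_def edge_var_def p1_def)

lemma p2_W: "1 \<le> j \<Longrightarrow> j \<le> n \<Longrightarrow> \<not> horiz_step (p2 n) (int (n+1-j)) \<and> edge_var Z (p2 n) (int (n+1-j)) = Rtwo Z (0,j)"
  by (auto simp: horiz_step_def edge_var_def p2_def)

lemma p2_S: "1 \<le> i \<Longrightarrow> horiz_step (p2 n) (int (n+i)) \<and> edge_var Z (p2 n) (int (n+i)) = Rone Z (i,0)"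
  by (auto simp: horiz_step_def edge_var_def p2_def)


lemma fst_meas: "(fst :: real \<times> real \<Rightarrow> real) \<in> borel_measurable borel"
  by (intro borel_measurable_continuous_onI continuous_on_fst continuous_on_id)

lemma abs_prod_le: "\<bar>a * b\<bar> \<le> a^2 + (b::real)^2"
proof -
  have "0 \<le> (\<bar>a\<bar> - \<bar>b\<bar>)^2" by simp
  then have "2 * (\<bar>a\<bar> * \<bar>b\<bar>) \<le> a^2 + b^2" by (simp add: power2_diff)
  moreover have "0 \<le> \<bar>a\<bar> * \<bar>b\<bar>" by simp
  ultimately have "\<bar>a\<bar> * \<bar>b\<bar> \<le> a^2 + b^2" by linarith
  then show ?thesis by (simp add: abs_mult)
qed

context prob_space begin

definition sqi :: "('a \<Rightarrow> real) \<Rightarrow> bool" where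
  "sqi f \<longleftrightarrow> f \<in> borel_measurable M \<and> integrable M (\<lambda>x. (f x)^2)"

lemma sqi_int: "sqi f \<Longrightarrow> integrable M f"
  unfolding sqi_def using square_integrable_imp_integrable by blast

lemma sqi_mult: assumes "sqi f" "sqi g" shows "integrable M (\<lambda>x. f x * g x)"
proof (rule Bochner_Integration.integrable_bound)
  show "integrable M (\<lambda>x. (f x)^2 + (g x)^2)" using assms unfolding sqi_def by simp
  show "(\<lambda>x. f x * g x) \<in> borel_measurable M" using assms unfolding sqi_def by (simp add: borel_measurable_times)
  show "AE x in M. norm (f x * g x) \<le> norm ((f x)^2 + (g x)^2)"
    using abs_prod_le by (simp add: add_nonneg_nonneg)
qed

lemma sqi_add: assumes "sqi f" "sqi g" shows "sqi (\<lambda>x. f x + g x)"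
proof -
  have "integrable M (\<lambda>x. (f x)^2 + (g x)^2 + 2 * (f x * g x))"
    using assms sqi_mult[OF assms] unfolding sqi_def by simp
  also have "(\<lambda>x. (f x)^2 + (g x)^2 + 2 * (f x * g x)) = (\<lambda>x. (f x + g x)^2)"
    by (simp add: fun_eq_iff power2_eq_square algebra_simps)
  finally show ?thesis using assms unfolding sqi_def by (simp add: borel_measurable_add)
qed

lemma sqi_const_diff: assumes "sqi f" shows "sqi (\<lambda>x. f x - c)"
proof -
  have "integrable M (\<lambda>x. (f x)^2 - 2 * c * f x + c^2)"
    using assms sqi_int[OF assms] unfolding sqi_def by simp
  also have "(\<lambda>x. (f x)^2 - 2 * c * f x + c^2) = (\<lambda>x. (f x - c)^2)"
    by (simp add: fun_eq_iff power2_eq_square algebra_simps)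
  finally show ?thesis using assms unfolding sqi_def by (simp add: borel_measurable_diff)
qed

lemma sqi_sum: "finite K \<Longrightarrow> (\<And>k. k \<in> K \<Longrightarrow> sqi (f k)) \<Longrightarrow> sqi (\<lambda>x. \<Sum>k\<in>K. f k x)"
proof (induction K rule: finite_induct)
  case empty then show ?case by (simp add: sqi_def)
next
  case (insert a K) then show ?case by (simp add: sqi_add)
qed

lemma sq_diff_exp: assumes "sqi U" "sqi V"
  shows "expectation (\<lambda>x. (U x - V x) * (U x - V x)) = expectation (\<lambda>x. U x * U x) - 2 * expectation (\<lambda>x. U x * V x) + expectation (\<lambda>x. V x * V x)"
proof -
  have "(\<lambda>x. (U x - V x) * (U x - V x)) = (\<lambda>x. U x * U x - 2 * (U x * V x) + V x * V x)"
    by (auto simp: algebra_simps)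
  then show ?thesis using sqi_mult[OF assms(1,1)] sqi_mult[OF assms(1,2)] sqi_mult[OF assms(2,2)]
    by simp
qed

lemma add_mult_exp: assumes "sqi U" "sqi V" "sqi W"
  shows "expectation (\<lambda>x. (U x + V x) * W x) = expectation (\<lambda>x. U x * W x) + expectation (\<lambda>x. V x * W x)"
proof -
  have "(\<lambda>x. (U x + V x) * W x) = (\<lambda>x. U x * W x + V x * W x)"
    by (auto simp: algebra_simps)
  then show ?thesis using sqi_mult[OF assms(1,3)] sqi_mult[OF assms(2,3)] by simp
qed

lemma sum_prod_exp:
  assumes "finite K1" "finite K2" "\<And>k. k \<in> K1 \<union> K2 \<Longrightarrow> sqi (f k)"
  shows "expectation (\<lambda>x. (\<Sum>k\<in>K1. f k x) * (\<Sum>l\<in>K2. f l x))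
     = (\<Sum>k\<in>K1. \<Sum>l\<in>K2. expectation (\<lambda>x. f k x * f l x))"
proof -
  have "expectation (\<lambda>x. (\<Sum>k\<in>K1. f k x) * (\<Sum>l\<in>K2. f l x))
      = expectation (\<lambda>x. \<Sum>k\<in>K1. \<Sum>l\<in>K2. f k x * f l x)"
    by (simp add: sum_product)
  also have "\<dots> = (\<Sum>k\<in>K1. expectation (\<lambda>x. \<Sum>l\<in>K2. f k x * f l x))"
    by (rule Bochner_Integration.integral_sum)
       (auto intro!: Bochner_Integration.integrable_sum sqi_mult assms(3))
  also have "\<dots> = (\<Sum>k\<in>K1. \<Sum>l\<in>K2. expectation (\<lambda>x. f k x * f l x))"
    by (intro sum.cong refl Bochner_Integration.integral_sum)
       (auto intro!: sqi_mult assms(3))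
  finally show ?thesis .
qed

lemma sum_var:
  assumes "finite K" "\<And>k. k \<in> K \<Longrightarrow> sqi (f k)"
    "\<And>k l. k \<in> K \<Longrightarrow> l \<in> K \<Longrightarrow> k \<noteq> l \<Longrightarrow> expectation (\<lambda>x. f k x * f l x) = 0"
    "\<And>k. k \<in> K \<Longrightarrow> expectation (\<lambda>x. f k x * f k x) = v"
  shows "expectation (\<lambda>x. (\<Sum>k\<in>K. f k x) * (\<Sum>k\<in>K. f k x)) = real (card K) * v"
proof -
  have "expectation (\<lambda>x. (\<Sum>k\<in>K. f k x) * (\<Sum>k\<in>K. f k x))
     = (\<Sum>k\<in>K. \<Sum>l\<in>K. expectation (\<lambda>x. f k x * f l x))"
    using sum_prod_exp[of K K f] assms by auto
  also have "\<dots> = (\<Sum>k\<in>K. \<Sum>l\<in>K. (if l = k then v else 0))"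
    using assms(3,4) by (intro sum.cong refl) auto
  also have "\<dots> = real (card K) * v" using assms(1) by simp
  finally show ?thesis .
qed

lemma sum_cov0:
  assumes "finite K1" "finite K2" "\<And>k. k \<in> K1 \<union> K2 \<Longrightarrow> sqi (f k)"
    "\<And>k l. k \<in> K1 \<Longrightarrow> l \<in> K2 \<Longrightarrow> expectation (\<lambda>x. f k x * f l x) = 0"
  shows "expectation (\<lambda>x. (\<Sum>k\<in>K1. f k x) * (\<Sum>l\<in>K2. f l x)) = 0"
  using sum_prod_exp[OF assms(1-3)] assms(4) by simp

lemma center_sum:
  assumes "finite K" "\<And>k. k \<in> K \<Longrightarrow> integrable M (f k)"
  shows "(\<lambda>x. (\<Sum>k\<in>K. f k x) - expectation (\<lambda>x. \<Sum>k\<in>K. f k x))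
       = (\<lambda>x. \<Sum>k\<in>K. (f k x - expectation (f k)))"
  using assms by (simp add: Bochner_Integration.integral_sum sum_subtractf)

lemma indep_centered_zero:
  fixes X :: "int \<Rightarrow> 'a \<Rightarrow> real"
  assumes ind: "indep_vars (\<lambda>_. borel) X UNIV"
    and i1: "integrable M (\<lambda>\<omega>. ln (X k \<omega>))" and i2: "integrable M (\<lambda>\<omega>. ln (X l \<omega>))" and kl: "k \<noteq> l"
  shows "expectation (\<lambda>\<omega>. (ln (X k \<omega>) - expectation (\<lambda>\<omega>. ln (X k \<omega>)))
           * (ln (X l \<omega>) - expectation (\<lambda>\<omega>. ln (X l \<omega>)))) = 0"
proof -
  define c where "c = (\<lambda>k \<omega>. ln (X k \<omega>) - expectation (\<lambda>\<omega>. ln (X k \<omega>)))"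
  have "indep_vars (\<lambda>_. borel) (\<lambda>k \<omega>. (\<lambda>x. ln x - expectation (\<lambda>\<omega>. ln (X k \<omega>))) (X k \<omega>)) UNIV"
    by (rule indep_vars_compose2[OF ind]) simp
  then have ind2: "indep_vars (\<lambda>_. borel) c {k,l}"
    unfolding c_def by (rule indep_vars_subset) simp
  have int: "integrable M (c i)" if "i \<in> {k,l}" for i
    using that i1 i2 unfolding c_def by auto
  have z: "expectation (c i) = 0" if "i \<in> {k,l}" for i
    using that i1 i2 unfolding c_def by (auto simp: prob_space)
  have "expectation (\<lambda>\<omega>. \<Prod>i\<in>{k,l}. c i \<omega>) = (\<Prod>i\<in>{k,l}. expectation (c i))"
    by (rule indep_vars_lebesgue_integral[OF _ ind2 int]) auto
  also have "\<dots> = 0" using z kl by simp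
  finally show ?thesis using kl unfolding c_def by simp
qed

lemma distr_transfer:
  assumes "X \<in> borel_measurable M" "Y \<in> borel_measurable M" "distr M borel X = distr M borel Y"
    "(g :: real \<Rightarrow> real) \<in> borel_measurable borel"
  shows "integral\<^sup>L M (\<lambda>\<omega>. g (X \<omega>)) = integral\<^sup>L M (\<lambda>\<omega>. g (Y \<omega>))"
    and "integrable M (\<lambda>\<omega>. g (X \<omega>)) \<longleftrightarrow> integrable M (\<lambda>\<omega>. g (Y \<omega>))"
  using integral_distr[OF assms(1,4)] integral_distr[OF assms(2,4)] assms(3)
    integrable_distr_eq[OF assms(1,4)] integrable_distr_eq[OF assms(2,4)] by auto

lemma family_facts:
  assumes "X \<in> borel_measurable M" "Y \<in> borel_measurable M" "distr M borel X = distr M borel Y"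
  shows "integrable M (\<lambda>\<omega>. ln (Y \<omega>)) \<Longrightarrow> integrable M (\<lambda>\<omega>. ln (X \<omega>))"
    and "expectation (\<lambda>\<omega>. ln (X \<omega>)) = expectation (\<lambda>\<omega>. ln (Y \<omega>))"
    and "integrable M (\<lambda>\<omega>. (ln (Y \<omega>))^2) \<Longrightarrow> sqi (\<lambda>\<omega>. ln (X \<omega>))"
    and "expectation (\<lambda>\<omega>. (ln (X \<omega>) - expectation (\<lambda>\<omega>. ln (X \<omega>))) * (ln (X \<omega>) - expectation (\<lambda>\<omega>. ln (X \<omega>))))
         = variance (\<lambda>\<omega>. ln (Y \<omega>))"
proof -
  show 1: "expectation (\<lambda>\<omega>. ln (X \<omega>)) = expectation (\<lambda>\<omega>. ln (Y \<omega>))"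
    by (rule distr_transfer(1)[OF assms]) simp
  show "integrable M (\<lambda>\<omega>. ln (Y \<omega>)) \<Longrightarrow> integrable M (\<lambda>\<omega>. ln (X \<omega>))"
    using distr_transfer(2)[OF assms, of ln] by simp
  show "integrable M (\<lambda>\<omega>. (ln (Y \<omega>))^2) \<Longrightarrow> sqi (\<lambda>\<omega>. ln (X \<omega>))"
    using distr_transfer(2)[OF assms, of "\<lambda>x. (ln x)^2"] assms(1) unfolding sqi_def by simp
  have "expectation (\<lambda>\<omega>. (ln (X \<omega>) - expectation (\<lambda>\<omega>. ln (Y \<omega>)))^2)
     = expectation (\<lambda>\<omega>. (ln (Y \<omega>) - expectation (\<lambda>\<omega>. ln (Y \<omega>)))^2)"
    by (rule distr_transfer(1)[OF assms]) simp
  then show "expectation (\<lambda>\<omega>. (ln (X \<omega>) - expectation (\<lambda>\<omega>. ln (X \<omega>))) * (ln (X \<omega>) - expectation (\<lambda>\<omega>. ln (X \<omega>))))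
         = variance (\<lambda>\<omega>. ln (Y \<omega>))"
    unfolding 1 by (simp add: power2_eq_square)
qed

end
theorem lemma2p4:
  fixes M :: "'a measure"
    and Y1 Y2 :: "nat \<times> nat \<Rightarrow> 'a \<Rightarrow> real"
    and R1 R2 :: "nat \<Rightarrow> 'a \<Rightarrow> real"
    and Z :: "'a \<Rightarrow> nat \<times> nat \<Rightarrow> real"
    and m n :: nat
  assumes prob: "prob_space M"
    and Z_def: "\<And>\<omega>. Z \<omega> = Zpf (\<lambda>z. Y1 z \<omega>) (\<lambda>z. Y2 z \<omega>) (\<lambda>i. R1 i \<omega>) (\<lambda>j. R2 j \<omega>)"
    and posY1: "\<And>z \<omega>. fst z \<ge> 1 \<Longrightarrow> snd z \<ge> 1 \<Longrightarrow> Y1 z \<omega> > 0"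
    and posY2: "\<And>z \<omega>. fst z \<ge> 1 \<Longrightarrow> snd z \<ge> 1 \<Longrightarrow> Y2 z \<omega> > 0"
    and posR1: "\<And>i \<omega>. i \<ge> 1 \<Longrightarrow> R1 i \<omega> > 0"
    and posR2: "\<And>j \<omega>. j \<ge> 1 \<Longrightarrow> R2 j \<omega> > 0"
    and indep: "prob_space.indep_vars M (\<lambda>_. (borel :: (real \<times> real) measure))
        (\<lambda>e \<omega>. case e of Inl z \<Rightarrow> (Y1 z \<omega>, Y2 z \<omega>)
                        | Inr (Inl i) \<Rightarrow> (R1 i \<omega>, 0)
                        | Inr (Inr j) \<Rightarrow> (R2 j \<omega>, 0))
        (Inl ` {z. fst z \<ge> 1 \<and> snd z \<ge> 1} \<union> Inr ` Inl ` {1..} \<union> Inr ` Inr ` {1..})"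
    and identY: "\<And>z. fst z \<ge> 1 \<Longrightarrow> snd z \<ge> 1 \<Longrightarrow>
        distr M borel (\<lambda>\<omega>. (Y1 z \<omega>, Y2 z \<omega>)) = distr M borel (\<lambda>\<omega>. (Y1 (1,1) \<omega>, Y2 (1,1) \<omega>))"
    and identR1: "\<And>i. i \<ge> 1 \<Longrightarrow> distr M borel (R1 i) = distr M borel (R1 1)"
    and identR2: "\<And>j. j \<ge> 1 \<Longrightarrow> distr M borel (R2 j) = distr M borel (R2 1)"
    and down_right_property: "\<And>p. down_right p \<Longrightarrow>
        prob_space.indep_vars M (\<lambda>_. (borel :: real measure)) (\<lambda>k \<omega>. edge_var (Z \<omega>) p k) UNIV
        \<and> (\<forall>k. distr M borel (\<lambda>\<omega>. edge_var (Z \<omega>) p k)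
               = (if horiz_step p k then distr M borel (R1 1) else distr M borel (R2 1)))"
  shows "(integrable M (\<lambda>\<omega>. ln (R1 1 \<omega>)) \<and> integrable M (\<lambda>\<omega>. ln (R2 1 \<omega>)) \<longrightarrow>
            prob_space.expectation M (\<lambda>\<omega>. ln (Z \<omega> (m, n)))
              = real m * prob_space.expectation M (\<lambda>\<omega>. ln (R1 1 \<omega>))
                + real n * prob_space.expectation M (\<lambda>\<omega>. ln (R2 1 \<omega>)))
       \<and> (integrable M (\<lambda>\<omega>. (ln (R1 1 \<omega>))\<^sup>2) \<and> integrable M (\<lambda>\<omega>. (ln (R2 1 \<omega>))\<^sup>2) \<longrightarrow>
            prob_space.variance M (\<lambda>\<omega>. ln (Z \<omega> (m, n)))
              = - real m * prob_space.variance M (\<lambda>\<omega>. ln (R1 1 \<omega>))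
                + real n * prob_space.variance M (\<lambda>\<omega>. ln (R2 1 \<omega>))
                + 2 * prob_space.covariance M
                        (\<lambda>\<omega>. ln (Z \<omega> (m, n)) - ln (Z \<omega> (0, n)))
                        (\<lambda>\<omega>. ln (Z \<omega> (m, 0)))
          \<and> prob_space.variance M (\<lambda>\<omega>. ln (Z \<omega> (m, n)))
              = real m * prob_space.variance M (\<lambda>\<omega>. ln (R1 1 \<omega>))
                - real n * prob_space.variance M (\<lambda>\<omega>. ln (R2 1 \<omega>))
                + 2 * prob_space.covariance M
                        (\<lambda>\<omega>. ln (Z \<omega> (m, n)) - ln (Z \<omega> (m, 0)))
                        (\<lambda>\<omega>. ln (Z \<omega> (0, n))))"
proof -
  interpret prob_space M by (rule prob)
  have Zpos: "Z \<omega> x > 0" for \<omega> x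
    unfolding Z_def by (rule Zpf_pos) (auto intro: posY1 posY2 posR1 posR2)
  have Z00: "Z \<omega> (0,0) = 1" for \<omega> by (simp add: Z_def Zpf_00)
  define X1 where "X1 = (\<lambda>k \<omega>. edge_var (Z \<omega>) (p1 m n) k)"
  define X2 where "X2 = (\<lambda>k \<omega>. edge_var (Z \<omega>) (p2 n) k)"
  have DR1: "indep_vars (\<lambda>_. borel) X1 UNIV"
    and D1: "\<And>k. distr M borel (X1 k) = (if horiz_step (p1 m n) k then distr M borel (R1 1) else distr M borel (R2 1))"
    using down_right_property[OF p1_dr[of m n]] unfolding X1_def by auto
  have DR2: "indep_vars (\<lambda>_. borel) X2 UNIV"
    and D2: "\<And>k. distr M borel (X2 k) = (if horiz_step (p2 n) k then distr M borel (R1 1) else distr M borel (R2 1))"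
    using down_right_property[OF p2_dr[of n]] unfolding X2_def by auto
  have mX1: "X1 k \<in> borel_measurable M" for k using DR1 unfolding indep_vars_def by auto
  have mX2: "X2 k \<in> borel_measurable M" for k using DR2 unfolding indep_vars_def by auto
  have rv: "\<forall>i\<in>(Inl ` {z. fst z \<ge> 1 \<and> snd z \<ge> 1} \<union> Inr ` Inl ` {1..} \<union> Inr ` Inr ` {1..}).
      random_variable borel ((\<lambda>e \<omega>. case e of Inl z \<Rightarrow> (Y1 z \<omega>, Y2 z \<omega>)
                        | Inr (Inl i) \<Rightarrow> (R1 i \<omega>, 0)
                        | Inr (Inr j) \<Rightarrow> (R2 j \<omega>, 0)) i)"
    using indep unfolding indep_vars_def by blast
  have "(\<lambda>\<omega>. (R1 1 \<omega>, 0::real)) \<in> borel_measurable M"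
    using bspec[OF rv, of "Inr (Inl 1)"] by simp
  from measurable_compose[OF this fst_meas] have mR1: "R1 1 \<in> borel_measurable M" by simp
  have "(\<lambda>\<omega>. (R2 1 \<omega>, 0::real)) \<in> borel_measurable M"
    using bspec[OF rv, of "Inr (Inr 1)"] by simp
  from measurable_compose[OF this fst_meas] have mR2: "R2 1 \<in> borel_measurable M" by simp
  define KN where "KN = int ` {1..m}"
  define KE where "KE = (\<lambda>j. int (m+n+1-j)) ` {1..n}"
  define KW where "KW = (\<lambda>j. int (n+1-j)) ` {1..n}"
  define KS where "KS = (\<lambda>i. int (n+i)) ` {1..m}"
  have fin: "finite KN" "finite KE" "finite KW" "finite KS"
    unfolding KN_def KE_def KW_def KS_def by auto
  have cardN: "card KN = m" unfolding KN_def by (subst card_image) (auto simp: inj_on_def)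
  have cardE: "card KE = n" unfolding KE_def by (subst card_image) (auto simp: inj_on_def)
  have cardW: "card KW = n" unfolding KW_def by (subst card_image) (auto simp: inj_on_def)
  have cardS: "card KS = m" unfolding KS_def by (subst card_image) (auto simp: inj_on_def)
  have disj1: "KN \<inter> KE = {}" unfolding KN_def KE_def by auto
  have disj2: "KW \<inter> KS = {}" unfolding KW_def KS_def by auto
  have hN: "distr M borel (X1 k) = distr M borel (R1 1)" if "k \<in> KN" for k
    using that D1[of k] p1_N unfolding KN_def by auto
  have hE: "distr M borel (X1 k) = distr M borel (R2 1)" if "k \<in> KE" for k
    using that D1[of k] p1_E unfolding KE_def by auto
  have hW: "distr M borel (X2 k) = distr M borel (R2 1)" if "k \<in> KW" for k
    using that D2[of k] p2_W unfolding KW_def by auto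
  have hS: "distr M borel (X2 k) = distr M borel (R1 1)" if "k \<in> KS" for k
    using that D2[of k] p2_S unfolding KS_def by auto

  have SN: "ln (Z \<omega> (m,n)) - ln (Z \<omega> (0,n)) = (\<Sum>k\<in>KN. ln (X1 k \<omega>))" for \<omega>
  proof -
    have "(\<Sum>k\<in>KN. ln (X1 k \<omega>)) = (\<Sum>i\<in>{1..m}. ln (X1 (int i) \<omega>))"
      unfolding KN_def by (subst sum.reindex) (auto simp: inj_on_def)
    also have "\<dots> = (\<Sum>i\<in>{1..m}. ln (Rone (Z \<omega>) (i,n)))"
      by (intro sum.cong refl) (auto simp: X1_def p1_N)
    finally show ?thesis using tele1[of "Z \<omega>" m n] Zpos by simp
  qed
  have SE: "ln (Z \<omega> (m,n)) - ln (Z \<omega> (m,0)) = (\<Sum>k\<in>KE. ln (X1 k \<omega>))" for \<omega>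
  proof -
    have "(\<Sum>k\<in>KE. ln (X1 k \<omega>)) = (\<Sum>j\<in>{1..n}. ln (X1 (int (m+n+1-j)) \<omega>))"
      unfolding KE_def by (subst sum.reindex) (auto simp: inj_on_def)
    also have "\<dots> = (\<Sum>j\<in>{1..n}. ln (Rtwo (Z \<omega>) (m,j)))"
      unfolding X1_def by (intro sum.cong refl) (metis p1_E atLeastAtMost_iff)
    finally show ?thesis using tele2[of "Z \<omega>" m n] Zpos by simp
  qed
  have SW: "ln (Z \<omega> (0,n)) = (\<Sum>k\<in>KW. ln (X2 k \<omega>))" for \<omega>
  proof -
    have "(\<Sum>k\<in>KW. ln (X2 k \<omega>)) = (\<Sum>j\<in>{1..n}. ln (X2 (int (n+1-j)) \<omega>))"
      unfolding KW_def by (subst sum.reindex) (auto simp: inj_on_def)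
    also have "\<dots> = (\<Sum>j\<in>{1..n}. ln (Rtwo (Z \<omega>) (0,j)))"
      unfolding X2_def by (intro sum.cong refl) (metis p2_W atLeastAtMost_iff)
    finally show ?thesis using tele2[of "Z \<omega>" 0 n] Zpos Z00[of \<omega>] by simp
  qed
  have SS: "ln (Z \<omega> (m,0)) = (\<Sum>k\<in>KS. ln (X2 k \<omega>))" for \<omega>
  proof -
    have "(\<Sum>k\<in>KS. ln (X2 k \<omega>)) = (\<Sum>i\<in>{1..m}. ln (X2 (int (n+i)) \<omega>))"
      unfolding KS_def by (subst sum.reindex) (auto simp: inj_on_def)
    also have "\<dots> = (\<Sum>i\<in>{1..m}. ln (Rone (Z \<omega>) (i,0)))"
      unfolding X2_def by (intro sum.cong refl) (metis p2_S atLeastAtMost_iff)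
    finally show ?thesis using tele1[of "Z \<omega>" m 0] Zpos Z00[of \<omega>] by simp
  qed

  have partA: "integrable M (\<lambda>\<omega>. ln (R1 1 \<omega>)) \<and> integrable M (\<lambda>\<omega>. ln (R2 1 \<omega>)) \<longrightarrow>
            expectation (\<lambda>\<omega>. ln (Z \<omega> (m, n)))
              = real m * expectation (\<lambda>\<omega>. ln (R1 1 \<omega>))
                + real n * expectation (\<lambda>\<omega>. ln (R2 1 \<omega>))"
  proof
    assume a: "integrable M (\<lambda>\<omega>. ln (R1 1 \<omega>)) \<and> integrable M (\<lambda>\<omega>. ln (R2 1 \<omega>))"
    have iN: "integrable M (\<lambda>\<omega>. ln (X1 k \<omega>))" if "k \<in> KN" for k
      using family_facts(1)[OF mX1 mR1 hN[OF that]] a by simp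
    have iW: "integrable M (\<lambda>\<omega>. ln (X2 k \<omega>))" if "k \<in> KW" for k
      using family_facts(1)[OF mX2 mR2 hW[OF that]] a by simp
    have eq: "(\<lambda>\<omega>. ln (Z \<omega> (m, n))) = (\<lambda>\<omega>. (\<Sum>k\<in>KW. ln (X2 k \<omega>)) + (\<Sum>k\<in>KN. ln (X1 k \<omega>)))"
      using SN SW by (auto simp: fun_eq_iff algebra_simps)
    have "expectation (\<lambda>\<omega>. ln (Z \<omega> (m, n)))
       = (\<Sum>k\<in>KW. expectation (\<lambda>\<omega>. ln (X2 k \<omega>))) + (\<Sum>k\<in>KN. expectation (\<lambda>\<omega>. ln (X1 k \<omega>)))"
      unfolding eq using iN iW
      by (simp add: Bochner_Integration.integral_sum Bochner_Integration.integrable_sum)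
    also have "\<dots> = (\<Sum>k\<in>KW. expectation (\<lambda>\<omega>. ln (R2 1 \<omega>))) + (\<Sum>k\<in>KN. expectation (\<lambda>\<omega>. ln (R1 1 \<omega>)))"
      using family_facts(2)[OF mX2 mR2 hW] family_facts(2)[OF mX1 mR1 hN] by simp
    finally show "expectation (\<lambda>\<omega>. ln (Z \<omega> (m, n)))
              = real m * expectation (\<lambda>\<omega>. ln (R1 1 \<omega>))
                + real n * expectation (\<lambda>\<omega>. ln (R2 1 \<omega>))"
      using cardN cardW by simp
  qed

  have partBC: "integrable M (\<lambda>\<omega>. (ln (R1 1 \<omega>))\<^sup>2) \<and> integrable M (\<lambda>\<omega>. (ln (R2 1 \<omega>))\<^sup>2) \<longrightarrow>
            variance (\<lambda>\<omega>. ln (Z \<omega> (m, n)))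
              = - real m * variance (\<lambda>\<omega>. ln (R1 1 \<omega>))
                + real n * variance (\<lambda>\<omega>. ln (R2 1 \<omega>))
                + 2 * covariance
                        (\<lambda>\<omega>. ln (Z \<omega> (m, n)) - ln (Z \<omega> (0, n)))
                        (\<lambda>\<omega>. ln (Z \<omega> (m, 0)))
          \<and> variance (\<lambda>\<omega>. ln (Z \<omega> (m, n)))
              = real m * variance (\<lambda>\<omega>. ln (R1 1 \<omega>))
                - real n * variance (\<lambda>\<omega>. ln (R2 1 \<omega>))
                + 2 * covariance
                        (\<lambda>\<omega>. ln (Z \<omega> (m, n)) - ln (Z \<omega> (m, 0)))
                        (\<lambda>\<omega>. ln (Z \<omega> (0, n)))"
  proof
    assume a: "integrable M (\<lambda>\<omega>. (ln (R1 1 \<omega>))\<^sup>2) \<and> integrable M (\<lambda>\<omega>. (ln (R2 1 \<omega>))\<^sup>2)"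
    define V1 where "V1 = variance (\<lambda>\<omega>. ln (R1 1 \<omega>))"
    define V2 where "V2 = variance (\<lambda>\<omega>. ln (R2 1 \<omega>))"
    define c1 where "c1 = (\<lambda>k \<omega>. ln (X1 k \<omega>) - expectation (\<lambda>\<omega>. ln (X1 k \<omega>)))"
    define c2 where "c2 = (\<lambda>k \<omega>. ln (X2 k \<omega>) - expectation (\<lambda>\<omega>. ln (X2 k \<omega>)))"
    have sq1: "sqi (\<lambda>\<omega>. ln (X1 k \<omega>))" if "k \<in> KN \<union> KE" for k
      using that family_facts(3)[OF mX1 mR1 hN] family_facts(3)[OF mX1 mR2 hE] a by auto
    have sq2: "sqi (\<lambda>\<omega>. ln (X2 k \<omega>))" if "k \<in> KW \<union> KS" for k
      using that family_facts(3)[OF mX2 mR2 hW] family_facts(3)[OF mX2 mR1 hS] a by auto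
    have iX1: "integrable M (\<lambda>\<omega>. ln (X1 k \<omega>))" if "k \<in> KN \<union> KE" for k
      using sqi_int[OF sq1[OF that]] .
    have iX2: "integrable M (\<lambda>\<omega>. ln (X2 k \<omega>))" if "k \<in> KW \<union> KS" for k
      using sqi_int[OF sq2[OF that]] .
    have sc1: "sqi (c1 k)" if "k \<in> KN \<union> KE" for k
      unfolding c1_def using sqi_const_diff[OF sq1[OF that]] by simp
    have sc2: "sqi (c2 k)" if "k \<in> KW \<union> KS" for k
      unfolding c2_def using sqi_const_diff[OF sq2[OF that]] by simp
    have z1: "expectation (\<lambda>\<omega>. c1 k \<omega> * c1 l \<omega>) = 0" if "k \<in> KN \<union> KE" "l \<in> KN \<union> KE" "k \<noteq> l" for k l
      unfolding c1_def by (rule indep_centered_zero[OF DR1 iX1[OF that(1)] iX1[OF that(2)] that(3)])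
    have z2: "expectation (\<lambda>\<omega>. c2 k \<omega> * c2 l \<omega>) = 0" if "k \<in> KW \<union> KS" "l \<in> KW \<union> KS" "k \<noteq> l" for k l
      unfolding c2_def by (rule indep_centered_zero[OF DR2 iX2[OF that(1)] iX2[OF that(2)] that(3)])
    have vN: "expectation (\<lambda>\<omega>. c1 k \<omega> * c1 k \<omega>) = V1" if "k \<in> KN" for k
      unfolding c1_def V1_def by (rule family_facts(4)[OF mX1 mR1 hN[OF that]])
    have vE: "expectation (\<lambda>\<omega>. c1 k \<omega> * c1 k \<omega>) = V2" if "k \<in> KE" for k
      unfolding c1_def V2_def by (rule family_facts(4)[OF mX1 mR2 hE[OF that]])
    have vW: "expectation (\<lambda>\<omega>. c2 k \<omega> * c2 k \<omega>) = V2" if "k \<in> KW" for k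
      unfolding c2_def V2_def by (rule family_facts(4)[OF mX2 mR2 hW[OF that]])
    have vS: "expectation (\<lambda>\<omega>. c2 k \<omega> * c2 k \<omega>) = V1" if "k \<in> KS" for k
      unfolding c2_def V1_def by (rule family_facts(4)[OF mX2 mR1 hS[OF that]])
    define A where "A = (\<lambda>\<omega>. \<Sum>k\<in>KW. c2 k \<omega>)"
    define B where "B = (\<lambda>\<omega>. \<Sum>k\<in>KN. c1 k \<omega>)"
    define C where "C = (\<lambda>\<omega>. \<Sum>k\<in>KS. c2 k \<omega>)"
    define D where "D = (\<lambda>\<omega>. \<Sum>k\<in>KE. c1 k \<omega>)"
    have sA: "sqi A" unfolding A_def by (rule sqi_sum[OF fin(3)]) (auto intro: sc2)
    have sB: "sqi B" unfolding B_def by (rule sqi_sum[OF fin(1)]) (auto intro: sc1)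
    have sC: "sqi C" unfolding C_def by (rule sqi_sum[OF fin(4)]) (auto intro: sc2)
    have sD: "sqi D" unfolding D_def by (rule sqi_sum[OF fin(2)]) (auto intro: sc1)
    have QAA: "expectation (\<lambda>\<omega>. A \<omega> * A \<omega>) = real (card KW) * V2"
      unfolding A_def by (rule sum_var[OF fin(3)]) (auto intro: sc2 z2 vW)
    have QBB: "expectation (\<lambda>\<omega>. B \<omega> * B \<omega>) = real (card KN) * V1"
      unfolding B_def by (rule sum_var[OF fin(1)]) (auto intro: sc1 z1 vN)
    have QCC: "expectation (\<lambda>\<omega>. C \<omega> * C \<omega>) = real (card KS) * V1"
      unfolding C_def by (rule sum_var[OF fin(4)]) (auto intro: sc2 z2 vS)
    have QDD: "expectation (\<lambda>\<omega>. D \<omega> * D \<omega>) = real (card KE) * V2"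
      unfolding D_def by (rule sum_var[OF fin(2)]) (auto intro: sc1 z1 vE)
    have QBD: "expectation (\<lambda>\<omega>. B \<omega> * D \<omega>) = 0"
      unfolding B_def D_def
    proof (rule sum_cov0[OF fin(1) fin(2)])
      show "\<And>k. k \<in> KN \<union> KE \<Longrightarrow> sqi (c1 k)" by (rule sc1)
      show "\<And>k l. k \<in> KN \<Longrightarrow> l \<in> KE \<Longrightarrow> expectation (\<lambda>x. c1 k x * c1 l x) = 0"
        using disj1 by (intro z1) auto
    qed
    have QCA: "expectation (\<lambda>\<omega>. C \<omega> * A \<omega>) = 0"
      unfolding C_def A_def
    proof (rule sum_cov0[OF fin(4) fin(3)])
      show "\<And>k. k \<in> KS \<union> KW \<Longrightarrow> sqi (c2 k)" by (rule sc2) auto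
      show "\<And>k l. k \<in> KS \<Longrightarrow> l \<in> KW \<Longrightarrow> expectation (\<lambda>x. c2 k x * c2 l x) = 0"
        using disj2 by (intro z2) auto
    qed
    have cB: "(\<lambda>\<omega>. ln (Z \<omega> (m,n)) - ln (Z \<omega> (0,n)) - expectation (\<lambda>\<omega>. ln (Z \<omega> (m,n)) - ln (Z \<omega> (0,n)))) = B"
      unfolding SN B_def c1_def by (rule center_sum[OF fin(1)]) (auto intro: iX1)
    have cD: "(\<lambda>\<omega>. ln (Z \<omega> (m,n)) - ln (Z \<omega> (m,0)) - expectation (\<lambda>\<omega>. ln (Z \<omega> (m,n)) - ln (Z \<omega> (m,0)))) = D"
      unfolding SE D_def c1_def by (rule center_sum[OF fin(2)]) (auto intro: iX1)
    have cA: "(\<lambda>\<omega>. ln (Z \<omega> (0,n)) - expectation (\<lambda>\<omega>. ln (Z \<omega> (0,n)))) = A"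
      unfolding SW A_def c2_def by (rule center_sum[OF fin(3)]) (auto intro: iX2)
    have cC: "(\<lambda>\<omega>. ln (Z \<omega> (m,0)) - expectation (\<lambda>\<omega>. ln (Z \<omega> (m,0)))) = C"
      unfolding SS C_def c2_def by (rule center_sum[OF fin(4)]) (auto intro: iX2)
    have cB': "ln (Z \<omega> (m,n)) - ln (Z \<omega> (0,n)) - expectation (\<lambda>\<omega>. ln (Z \<omega> (m,n)) - ln (Z \<omega> (0,n))) = B \<omega>" for \<omega>
      using fun_cong[OF cB, of \<omega>] by simp
    have cD': "ln (Z \<omega> (m,n)) - ln (Z \<omega> (m,0)) - expectation (\<lambda>\<omega>. ln (Z \<omega> (m,n)) - ln (Z \<omega> (m,0))) = D \<omega>" for \<omega>
      using fun_cong[OF cD, of \<omega>] by simp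
    have cA': "ln (Z \<omega> (0,n)) - expectation (\<lambda>\<omega>. ln (Z \<omega> (0,n))) = A \<omega>" for \<omega>
      using fun_cong[OF cA, of \<omega>] by simp
    have cC': "ln (Z \<omega> (m,0)) - expectation (\<lambda>\<omega>. ln (Z \<omega> (m,0))) = C \<omega>" for \<omega>
      using fun_cong[OF cC, of \<omega>] by simp
    have iW': "integrable M (\<lambda>\<omega>. ln (Z \<omega> (0,n)))"
      unfolding SW by (auto intro!: Bochner_Integration.integrable_sum iX2)
    have iN': "integrable M (\<lambda>\<omega>. ln (Z \<omega> (m,n)) - ln (Z \<omega> (0,n)))"
      unfolding SN by (auto intro!: Bochner_Integration.integrable_sum iX1)
    have iS': "integrable M (\<lambda>\<omega>. ln (Z \<omega> (m,0)))"
      unfolding SS by (auto intro!: Bochner_Integration.integrable_sum iX2)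
    have iE': "integrable M (\<lambda>\<omega>. ln (Z \<omega> (m,n)) - ln (Z \<omega> (m,0)))"
      unfolding SE by (auto intro!: Bochner_Integration.integrable_sum iX1)
    have EL1: "expectation (\<lambda>\<omega>. ln (Z \<omega> (m,n))) = expectation (\<lambda>\<omega>. ln (Z \<omega> (0,n)))
        + expectation (\<lambda>\<omega>. ln (Z \<omega> (m,n)) - ln (Z \<omega> (0,n)))"
    proof -
      have "(\<lambda>\<omega>. ln (Z \<omega> (m,n))) = (\<lambda>\<omega>. ln (Z \<omega> (0,n)) + (ln (Z \<omega> (m,n)) - ln (Z \<omega> (0,n))))"
        by simp
      then show ?thesis using Bochner_Integration.integral_add[OF iW' iN'] by simp
    qed
    have EL2: "expectation (\<lambda>\<omega>. ln (Z \<omega> (m,n))) = expectation (\<lambda>\<omega>. ln (Z \<omega> (m,0)))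
        + expectation (\<lambda>\<omega>. ln (Z \<omega> (m,n)) - ln (Z \<omega> (m,0)))"
    proof -
      have "(\<lambda>\<omega>. ln (Z \<omega> (m,n))) = (\<lambda>\<omega>. ln (Z \<omega> (m,0)) + (ln (Z \<omega> (m,n)) - ln (Z \<omega> (m,0))))"
        by simp
      then show ?thesis using Bochner_Integration.integral_add[OF iS' iE'] by simp
    qed
    have cL1: "ln (Z \<omega> (m,n)) - expectation (\<lambda>\<omega>. ln (Z \<omega> (m,n))) = A \<omega> + B \<omega>" for \<omega>
      using EL1 cA'[of \<omega>] cB'[of \<omega>] by linarith
    have cL2: "ln (Z \<omega> (m,n)) - expectation (\<lambda>\<omega>. ln (Z \<omega> (m,n))) = C \<omega> + D \<omega>" for \<omega>
      using EL2 cC'[of \<omega>] cD'[of \<omega>] by linarith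
    have VL1: "variance (\<lambda>\<omega>. ln (Z \<omega> (m, n))) = expectation (\<lambda>\<omega>. (A \<omega> + B \<omega>) * (A \<omega> + B \<omega>))"
      by (simp only: cL1 power2_eq_square)
    have VL2: "variance (\<lambda>\<omega>. ln (Z \<omega> (m, n))) = expectation (\<lambda>\<omega>. (C \<omega> + D \<omega>) * (C \<omega> + D \<omega>))"
      by (simp only: cL2 power2_eq_square)
    have Aeq: "A = (\<lambda>\<omega>. (C \<omega> + D \<omega>) - B \<omega>)"
    proof (rule ext)
      fix \<omega> show "A \<omega> = C \<omega> + D \<omega> - B \<omega>" using cL1[of \<omega>] cL2[of \<omega>] by linarith
    qed
    have Ceq: "C = (\<lambda>\<omega>. (A \<omega> + B \<omega>) - D \<omega>)"
    proof (rule ext)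
      fix \<omega> show "C \<omega> = A \<omega> + B \<omega> - D \<omega>" using cL1[of \<omega>] cL2[of \<omega>] by linarith
    qed
    have covB: "covariance (\<lambda>\<omega>. ln (Z \<omega> (m, n)) - ln (Z \<omega> (0, n))) (\<lambda>\<omega>. ln (Z \<omega> (m, 0)))
       = expectation (\<lambda>\<omega>. C \<omega> * B \<omega>)"
      unfolding covariance_def cB' cC' by (simp add: mult.commute)
    have covC: "covariance (\<lambda>\<omega>. ln (Z \<omega> (m, n)) - ln (Z \<omega> (m, 0))) (\<lambda>\<omega>. ln (Z \<omega> (0, n)))
       = expectation (\<lambda>\<omega>. A \<omega> * D \<omega>)"
      unfolding covariance_def cD' cA' by (simp add: mult.commute)
    have QDB: "expectation (\<lambda>\<omega>. D \<omega> * B \<omega>) = 0" using QBD by (simp add: mult.commute)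
    have "real n * V2 = expectation (\<lambda>\<omega>. A \<omega> * A \<omega>)" using QAA cardW by simp
    also have "\<dots> = expectation (\<lambda>\<omega>. (C \<omega> + D \<omega>) * (C \<omega> + D \<omega>))
        - 2 * expectation (\<lambda>\<omega>. (C \<omega> + D \<omega>) * B \<omega>) + expectation (\<lambda>\<omega>. B \<omega> * B \<omega>)"
      unfolding Aeq by (rule sq_diff_exp[OF sqi_add[OF sC sD] sB])
    also have "expectation (\<lambda>\<omega>. (C \<omega> + D \<omega>) * B \<omega>) = expectation (\<lambda>\<omega>. C \<omega> * B \<omega>)"
      using add_mult_exp[OF sC sD sB] QDB by simp
    finally have b: "real n * V2 = variance (\<lambda>\<omega>. ln (Z \<omega> (m, n)))
        - 2 * expectation (\<lambda>\<omega>. C \<omega> * B \<omega>) + real m * V1"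
      using VL2 QBB cardN by simp
    have "real m * V1 = expectation (\<lambda>\<omega>. C \<omega> * C \<omega>)" using QCC cardS by simp
    also have "\<dots> = expectation (\<lambda>\<omega>. (A \<omega> + B \<omega>) * (A \<omega> + B \<omega>))
        - 2 * expectation (\<lambda>\<omega>. (A \<omega> + B \<omega>) * D \<omega>) + expectation (\<lambda>\<omega>. D \<omega> * D \<omega>)"
      unfolding Ceq by (rule sq_diff_exp[OF sqi_add[OF sA sB] sD])
    also have "expectation (\<lambda>\<omega>. (A \<omega> + B \<omega>) * D \<omega>) = expectation (\<lambda>\<omega>. A \<omega> * D \<omega>)"
      using add_mult_exp[OF sA sB sD] QBD by simp
    finally have c: "real m * V1 = variance (\<lambda>\<omega>. ln (Z \<omega> (m, n)))
        - 2 * expectation (\<lambda>\<omega>. A \<omega> * D \<omega>) + real n * V2"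
      using VL1 QDD cardE by simp
    show "variance (\<lambda>\<omega>. ln (Z \<omega> (m, n)))
              = - real m * variance (\<lambda>\<omega>. ln (R1 1 \<omega>))
                + real n * variance (\<lambda>\<omega>. ln (R2 1 \<omega>))
                + 2 * covariance
                        (\<lambda>\<omega>. ln (Z \<omega> (m, n)) - ln (Z \<omega> (0, n)))
                        (\<lambda>\<omega>. ln (Z \<omega> (m, 0)))
          \<and> variance (\<lambda>\<omega>. ln (Z \<omega> (m, n)))
              = real m * variance (\<lambda>\<omega>. ln (R1 1 \<omega>))
                - real n * variance (\<lambda>\<omega>. ln (R2 1 \<omega>))
                + 2 * covariance
                        (\<lambda>\<omega>. ln (Z \<omega> (m, n)) - ln (Z \<omega> (m, 0)))
                        (\<lambda>\<omega>. ln (Z \<omega> (0, n)))"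
      unfolding covB covC V1_def[symmetric] V2_def[symmetric] using b c by simp
  qed
  show ?thesis using partA partBC by blast
qed
end
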